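(* Fix $d\ge1$, the feasible set $\mathcal{X}=\mathbb{R}^d$, starting point $x_0=\mathbf{0}$, and $0<\mu\le L$, with quadratic switching cost. The competitive ratio of every online algorithm in the limited information setting is $\Omega\big(\frac{L}{\sqrt{\mu}}\big)$ as $\mu\to0$; that is, there are constants $c>0$ and $\mu_0>0$ such that for all $0<\mu\le\mu_0$, all $L\ge\mu$ and every such online algorithm $\mathcal{A}$, $\mathrm{cr}_{\mathcal{A}}\ge c\,L/\sqrt{\mu}$.
   Context: A problem instance consists of a horizon $T\ge1$ and differentiable functions $f_1,\dots,f_T:\mathbb{R}^d\to[0,\infty)$ with $\frac{\mu}{2}\|y-x\|^2\le f_t(y)-f_t(x)-\langle\nabla f_t(x),y-x\rangle\le\frac{L}{2}\|y-x\|^2$ for all $x,y$. An online algorithm in the limited information setting chooses, at each time $t$, an action $x_t$ using only $x_0$, the known parameters, and gradients of $f_{t-1}$ (and of earlier functions) evaluated at finitely many (adaptively chosen) points; in particular $x_t$ is chosen without any information about $f_t,\dots,f_T$. The algorithm's cost is $C_{\mathcal{A}}=\sum_{t=1}^T\big(f_t(x_t)+\frac12\|x_t-x_{t-1}\|^2\big)$, $C_{\mathsf{OPT}}$ is the minimum of the same expression over all $(x_1,\dots,x_T)$ with the same $x_0$, and $\mathrm{cr}_{\mathcal{A}}=\sup C_{\mathcal{A}}/C_{\mathsf{OPT}}$ over all problem instances (including all horizons $T$). *)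

theory Defs
  imports "HOL-Analysis.Analysis"
begin

text \<open>Actions of an online algorithm: query the gradient of f_s at a point,
  or commit to the action of the current round.\<close>
datatype 'a action = Query nat 'a | Play 'a

text \<open>Transcript of all gradient queries so far: (index s, point y, answer grad f_s y).\<close>
type_synonym 'd hist = "(nat \<times> (real^'d) \<times> (real^'d)) list"

text \<open>A deterministic online algorithm is a map (round t, transcript) to the next action.
  exec A g t h h' x: in round t, starting with transcript h, the algorithm makes finitely
  many adaptive queries to gradients of f_1..f_(t-1) only, ending with transcript h', and plays x.\<close>
inductive exec ::
  "(nat \<Rightarrow> 'd::finite hist \<Rightarrow> (real^'d) action) \<Rightarrow> (nat \<Rightarrow> real^'d \<Rightarrow> real^'d)
   \<Rightarrow> nat \<Rightarrow> 'd hist \<Rightarrow> 'd hist \<Rightarrow> real^'d \<Rightarrow> bool"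
  for A g where
  play: "A t h = Play x \<Longrightarrow> exec A g t h h x"
| query: "A t h = Query s y \<Longrightarrow> 1 \<le> s \<Longrightarrow> s < t
           \<Longrightarrow> exec A g t (h @ [(s, y, g s y)]) h' x \<Longrightarrow> exec A g t h h' x"

primrec traj ::
  "(nat \<Rightarrow> 'd::finite hist \<Rightarrow> (real^'d) action) \<Rightarrow> (nat \<Rightarrow> real^'d \<Rightarrow> real^'d)
   \<Rightarrow> nat \<Rightarrow> 'd hist \<times> (real^'d)" where
  "traj A g 0 = ([], 0)"
| "traj A g (Suc t) = (THE p. exec A g (Suc t) (fst (traj A g t)) (fst p) (snd p))"

definition is_instance ::
  "real \<Rightarrow> real \<Rightarrow> nat \<Rightarrow> (nat \<Rightarrow> real^'d::finite \<Rightarrow> real) \<Rightarrow> (nat \<Rightarrow> real^'d \<Rightarrow> real^'d) \<Rightarrow> bool"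
  where
  "is_instance \<mu> L T f g \<longleftrightarrow> T \<ge> 1 \<and>
     (\<forall>t\<in>{1..T}.
        (\<forall>x. f t x \<ge> 0) \<and>
        (\<forall>x. (f t has_derivative (\<lambda>h. g t x \<bullet> h)) (at x)) \<and>
        (\<forall>x y. \<mu> / 2 * (norm (y - x))\<^sup>2 \<le> f t y - f t x - g t x \<bullet> (y - x) \<and>
               f t y - f t x - g t x \<bullet> (y - x) \<le> L / 2 * (norm (y - x))\<^sup>2))"

definition cost :: "(nat \<Rightarrow> real^'d::finite \<Rightarrow> real) \<Rightarrow> nat \<Rightarrow> (nat \<Rightarrow> real^'d) \<Rightarrow> real" where
  "cost f T X = (\<Sum>t=1..T. f t (X t) + 1/2 * (norm (X t - X (t - 1)))\<^sup>2)"

definition opt_cost :: "(nat \<Rightarrow> real^'d::finite \<Rightarrow> real) \<Rightarrow> nat \<Rightarrow> real" where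
  "opt_cost f T = Inf {cost f T X | X. X 0 = 0}"

definition alg_cost ::
  "(nat \<Rightarrow> 'd::finite hist \<Rightarrow> (real^'d) action) \<Rightarrow> (nat \<Rightarrow> real^'d \<Rightarrow> real)
   \<Rightarrow> (nat \<Rightarrow> real^'d \<Rightarrow> real^'d) \<Rightarrow> nat \<Rightarrow> real" where
  "alg_cost A f g T = cost f T (\<lambda>t. snd (traj A g t))"

definition valid_alg :: "real \<Rightarrow> real \<Rightarrow> (nat \<Rightarrow> 'd::finite hist \<Rightarrow> (real^'d) action) \<Rightarrow> bool" where
  "valid_alg \<mu> L A \<longleftrightarrow> (\<forall>T f g. is_instance \<mu> L T f g \<longrightarrow>
      (\<forall>t<T. \<exists>h' x. exec A g (Suc t) (fst (traj A g t)) h' x))"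

text \<open>Competitive ratio as a supremum in the extended reals (c/0 = \<infinity> for c > 0, 0/0 = 0).\<close>
definition competitive_ratio :: "real \<Rightarrow> real \<Rightarrow> (nat \<Rightarrow> 'd::finite hist \<Rightarrow> (real^'d) action) \<Rightarrow> ereal" where
  "competitive_ratio \<mu> L A =
     (SUP p \<in> {(T, f, g). is_instance \<mu> L T f g}.
        (case p of (T, f, g) \<Rightarrow> ereal (alg_cost A f g T) / ereal (opt_cost f T)))"

end

theory Submission imports Defs begin
definition qf :: "real \<Rightarrow> real^'d::finite \<Rightarrow> real^'d \<Rightarrow> real" where
  "qf a c x = a/2 * (norm (x - c))\<^sup>2"

lemma qf_identity:
  "qf a c y - qf a c x - (a *\<^sub>R (x - c)) \<bullet> (y - x) = a/2 * (norm (y - x))\<^sup>2"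
proof -
  have h1: "(a *\<^sub>R (x - c)) \<bullet> (y - x) = a * ((x - c) \<bullet> (y - x))" by simp
  have e: "x - c + (y - x) = y - c" by simp
  have h2: "(x - c) \<bullet> (y - x) = ((norm (y - c))\<^sup>2 - (norm (x - c))\<^sup>2 - (norm (y - x))\<^sup>2) / 2"
    using dot_norm[of "x - c" "y - x"] unfolding e .
  show ?thesis unfolding qf_def h1 h2 by (simp add: field_simps)
qed

lemma par: "(norm (x - e))\<^sup>2 + (norm (x + e))\<^sup>2 = 2 * (norm x)\<^sup>2 + 2 * (norm (e::real^'d::finite))\<^sup>2"
proof -
  have "x \<bullet> e = ((norm (x + e))\<^sup>2 - (norm x)\<^sup>2 - (norm e)\<^sup>2) / 2" by (rule dot_norm)
  moreover have "x \<bullet> e = ((norm x)\<^sup>2 + (norm e)\<^sup>2 - (norm (x - e))\<^sup>2) / 2" by (rule dot_norm_neg)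
  ultimately show ?thesis by (simp add: field_simps)
qed

lemma qf_deriv: "(qf a c has_derivative (\<lambda>h. (a *\<^sub>R (x - c)) \<bullet> h)) (at x)"
proof -
  have "((\<lambda>x. a/2 * ((x - c) \<bullet> (x - c))) has_derivative
        (\<lambda>h. a/2 * (h \<bullet> (x - c) + (x - c) \<bullet> h))) (at x)"
    by (auto intro!: derivative_eq_intros)
  moreover have "(\<lambda>h. a/2 * (h \<bullet> (x - c) + (x - c) \<bullet> h)) = (\<lambda>h. (a *\<^sub>R (x - c)) \<bullet> h)"
    by (auto simp: inner_commute algebra_simps)
  ultimately show ?thesis unfolding qf_def power2_norm_eq_inner by simp
qed

lemma qf_nonneg: "0 \<le> a \<Longrightarrow> 0 \<le> qf a c x"
  unfolding qf_def by simp

lemma exec_indep: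
  assumes "exec A g t h h' x" "\<And>s. s < t \<Longrightarrow> g s = g' s"
  shows "exec A g' t h h' x"
  using assms
proof (induction rule: exec.induct)
  case (play t h x) then show ?case using exec.play by blast
next
  case (query t h s y h' x)
  have "exec A g' t (h @ [(s, y, g s y)]) h' x" using query by blast
  moreover have "g s = g' s" using query by blast
  ultimately have "exec A g' t (h @ [(s, y, g' s y)]) h' x" by simp
  then show ?case using query(1,2,3) exec.query by blast
qed

lemma traj_indep:
  assumes "\<And>s. s < T \<Longrightarrow> g s = g' s"
  shows "t \<le> T \<Longrightarrow> traj A g t = traj A g' t"
proof (induction t)
  case 0 then show ?case by simp
next
  case (Suc t)
  have IH: "traj A g t = traj A g' t" using Suc by simp
  have gs: "g s = g' s" if "s < Suc t" for s using that Suc.prems assms by simp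
  have E: "exec A g (Suc t) a b c = exec A g' (Suc t) a b c" for a b c
  proof
    assume "exec A g (Suc t) a b c" then show "exec A g' (Suc t) a b c"
      by (rule exec_indep) (rule gs)
  next
    assume "exec A g' (Suc t) a b c" then show "exec A g (Suc t) a b c"
      by (rule exec_indep) (rule gs[symmetric])
  qed
  show ?case unfolding traj.simps IH E ..
qed
lemma cost_nonneg:
  assumes "\<forall>t\<in>{1..T}. \<forall>x. f t x \<ge> 0"
  shows "0 \<le> cost f T X"
  unfolding cost_def using assms by (intro sum_nonneg) auto

lemma cost_ge_last:
  assumes "T \<ge> 1" "\<forall>t\<in>{1..T}. \<forall>x. f t x \<ge> 0"
  shows "f T (X T) \<le> cost f T X"
proof -
  have "f T (X T) \<le> f T (X T) + 1/2 * (norm (X T - X (T - 1)))\<^sup>2" by simp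
  also have "\<dots> \<le> cost f T X"
    unfolding cost_def
  proof (rule member_le_sum)
    show "T \<in> {1..T}" using assms by simp
    show "finite {1..T}" by simp
    fix t assume "t \<in> {1..T} - {T}"
    then have "0 \<le> f t (X t)" using assms by blast
    then show "0 \<le> f t (X t) + 1/2 * (norm (X t - X (t - 1)))\<^sup>2" by simp
  qed
  finally show ?thesis .
qed

lemma opt_le:
  assumes "\<forall>t\<in>{1..T}. \<forall>x. f t x \<ge> 0" "X 0 = 0"
  shows "opt_cost f T \<le> cost f T X"
  unfolding opt_cost_def
proof (rule cInf_lower)
  show "cost f T X \<in> {cost f T X |X. X 0 = 0}" using assms(2) by blast
  show "bdd_below {cost f T X |X. X 0 = 0}"
    by (rule bdd_belowI[where m=0]) (use cost_nonneg[OF assms(1)] in blast)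
qed

lemma opt_nonneg:
  assumes "\<forall>t\<in>{1..T}. \<forall>x. f t x \<ge> 0"
  shows "0 \<le> opt_cost f T"
  unfolding opt_cost_def
proof (rule cInf_greatest)
  show "{cost f T X |X. X 0 = 0} \<noteq> {}" by blast
  show "\<And>x. x \<in> {cost f T X |X. X 0 = 0} \<Longrightarrow> 0 \<le> x"
    using cost_nonneg[OF assms(1)] by blast
qed
theorem lemma10:
  "\<exists>c>0. \<exists>\<mu>0>0. \<forall>\<mu> L (A :: nat \<Rightarrow> 'd::finite hist \<Rightarrow> (real^'d) action).
      0 < \<mu> \<and> \<mu> \<le> \<mu>0 \<and> \<mu> \<le> L \<and> valid_alg \<mu> L A
      \<longrightarrow> ereal (c * L / sqrt \<mu>) \<le> competitive_ratio \<mu> L A"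
proof -
  have main: "ereal (1/6 * L / sqrt \<mu>) \<le> competitive_ratio \<mu> L A"
    if mu: "0 < \<mu>" "\<mu> \<le> 1" "\<mu> \<le> L" for \<mu> L and A :: "nat \<Rightarrow> 'd::finite hist \<Rightarrow> (real^'d) action"
  proof -
    define N where "N = nat (ceiling (1 / sqrt \<mu>))"
    define T where "T = Suc N"
    have sq: "0 < sqrt \<mu>" "sqrt \<mu> \<le> 1" using mu by auto
    have "0 < 1 / sqrt \<mu>" using sq by simp
    then have cpos: "0 \<le> ceiling (1 / sqrt \<mu>)" by (simp add: less_le_trans[of "-1" 0])
    have RN: "real N = real_of_int (ceiling (1 / sqrt \<mu>))" unfolding N_def using cpos by simp
    have N1: "real N \<ge> 1 / sqrt \<mu>" unfolding RN by (rule le_of_int_ceiling)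
    have N2: "real N \<le> 1 / sqrt \<mu> + 1" unfolding RN using ceiling_correct[of "1 / sqrt \<mu>"] by linarith
    have "1 / sqrt \<mu> \<ge> 1" using sq by simp
    hence Npos: "real N \<ge> 1" using N1 by linarith
    define e :: "real^'d" where "e = axis undefined 1"
    have ne: "norm e = 1" unfolding e_def by simp
    define fz :: "real^'d \<Rightarrow> nat \<Rightarrow> real^'d \<Rightarrow> real"
      where "fz z = (\<lambda>s. if s = T then qf L z else qf \<mu> 0)" for z
    define gz :: "real^'d \<Rightarrow> nat \<Rightarrow> real^'d \<Rightarrow> real^'d"
      where "gz z = (\<lambda>s x. if s = T then L *\<^sub>R (x - z) else \<mu> *\<^sub>R (x - 0))" for z
    have fnn: "\<forall>t\<in>{1..T}. \<forall>x. fz z t x \<ge> 0" for z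
      unfolding fz_def using mu by (auto intro: qf_nonneg)
    have conv: "\<mu> / 2 * (norm (y - x))\<^sup>2 \<le> qf a c y - qf a c x - (a *\<^sub>R (x - c)) \<bullet> (y - x) \<and>
          qf a c y - qf a c x - (a *\<^sub>R (x - c)) \<bullet> (y - x) \<le> L / 2 * (norm (y - x))\<^sup>2"
      if "\<mu> \<le> a" "a \<le> L" for a c x y
    proof -
      have "\<mu> / 2 * (norm (y - x))\<^sup>2 \<le> a / 2 * (norm (y - x))\<^sup>2"
        by (rule mult_right_mono) (use that in auto)
      moreover have "a / 2 * (norm (y - x))\<^sup>2 \<le> L / 2 * (norm (y - x))\<^sup>2"
        by (rule mult_right_mono) (use that in auto)
      ultimately show ?thesis unfolding qf_identity by simp
    qed
    have inst: "is_instance \<mu> L T (fz z) (gz z)" for z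
      unfolding is_instance_def
    proof (intro conjI ballI)
      show "1 \<le> T" unfolding T_def by simp
      fix t assume t: "t \<in> {1..T}"
      define a where "a = (if t = T then L else \<mu>)"
      define c where "c = (if t = T then z else 0)"
      have ft: "fz z t = qf a c" unfolding fz_def a_def c_def by simp
      have gt: "gz z t = (\<lambda>x. a *\<^sub>R (x - c))" unfolding gz_def a_def c_def by auto
      have a1: "\<mu> \<le> a" "a \<le> L" unfolding a_def using mu by auto
      show "\<forall>x. 0 \<le> fz z t x" using fnn t by blast
      show "\<forall>x. (fz z t has_derivative (\<lambda>h. gz z t x \<bullet> h)) (at x)"
        unfolding ft gt using qf_deriv by blast
      show "\<forall>x y. \<mu> / 2 * (norm (y - x))\<^sup>2 \<le> fz z t y - fz z t x - gz z t x \<bullet> (y - x) \<and>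
               fz z t y - fz z t x - gz z t x \<bullet> (y - x) \<le> L / 2 * (norm (y - x))\<^sup>2"
        unfolding ft gt using conv[OF a1] by blast
    qed
    have inS: "(T, fz z, gz z) \<in> {(T, f, g). is_instance \<mu> L T f g}" for z
      using inst by simp
    have tr: "traj A (gz e) T = traj A (gz (-e)) T"
      by (rule traj_indep[of T]) (auto simp: gz_def)
    define xT where "xT = snd (traj A (gz e) T)"
    have algb: "qf L z (snd (traj A (gz z) T)) \<le> alg_cost A (fz z) (gz z) T" for z
    proof -
      have "fz z T (snd (traj A (gz z) T)) \<le> cost (fz z) T (\<lambda>t. snd (traj A (gz z) t))"
        by (rule cost_ge_last[OF _ fnn[of z]]) (simp add: T_def)
      then show ?thesis unfolding alg_cost_def fz_def by simp
    qed
    have par1: "(norm (xT - e))\<^sup>2 + (norm (xT + e))\<^sup>2 = 2 * (norm xT)\<^sup>2 + 2"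
      using par[of xT e] ne by simp
    have nn: "0 \<le> (norm xT)\<^sup>2" by simp
    have me: "xT - (-e) = xT + e" by simp
    have "(norm (xT - e))\<^sup>2 \<ge> 1 \<or> (norm (xT - (-e)))\<^sup>2 \<ge> 1"
      unfolding me using par1 nn by linarith
    then obtain z where z: "z = e \<or> z = -e" "(norm (xT - z))\<^sup>2 \<ge> 1" by blast
    have nz: "norm z = 1" using z ne by auto
    have xTz: "snd (traj A (gz z) T) = xT" using z tr unfolding xT_def by auto
    have alg: "L / 2 \<le> alg_cost A (fz z) (gz z) T"
    proof -
      have "L / 2 * 1 \<le> L / 2 * (norm (xT - z))\<^sup>2"
        by (rule mult_left_mono) (use z(2) mu in auto)
      then have "L / 2 \<le> qf L z xT" unfolding qf_def by simp
      then show ?thesis using algb[of z] xTz by simp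
    qed
    define X where "X t = (real (min t N) / real N) *\<^sub>R z" for t
    have X0: "X 0 = 0" unfolding X_def by simp
    have trm: "fz z t (X t) + 1/2 * (norm (X t - X (t - 1)))\<^sup>2 \<le> \<mu>/2 + 1/(2 * real N ^ 2)"
      if t: "t \<in> {1..T}" for t
    proof (cases "t = T")
      case True
      then have "X t = z" "X (t - 1) = z" unfolding X_def T_def using Npos by auto
      then show ?thesis using True mu by (simp add: fz_def qf_def)
    next
      case False
      then have tN: "t \<le> N" "1 \<le> t" using t T_def by auto
      have mt: "min t N = t" "min (t - 1) N = t - 1" using tN by auto
      have rt: "real (t - 1) = real t - 1" using tN by simp
      have d: "X t - X (t - 1) = (1 / real N) *\<^sub>R z"
      proof -
        have "X t - X (t - 1) = (real t / real N - (real t - 1) / real N) *\<^sub>R z"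
          unfolding X_def mt rt by (simp add: scaleR_diff_left)
        also have "real t / real N - (real t - 1) / real N = 1 / real N"
          by (simp add: diff_divide_distrib[symmetric])
        finally show ?thesis .
      qed
      have r: "real t / real N \<le> 1" using tN Npos by simp
      have r0: "0 \<le> real t / real N" by simp
      have f1: "fz z t (X t) = \<mu> / 2 * (real t / real N)\<^sup>2"
        unfolding fz_def qf_def X_def mt using False nz by simp
      have "(real t / real N)\<^sup>2 \<le> 1" using r r0 by (simp add: power_le_one)
      hence f2: "fz z t (X t) \<le> \<mu> / 2" unfolding f1 using mu by simp
      have "(norm (X t - X (t - 1)))\<^sup>2 = 1 / real N ^ 2" unfolding d using nz Npos
        by (simp add: power_divide)
      then show ?thesis using f2 by simp
    qed
    have "cost (fz z) T X \<le> real (card {1..T}) * (\<mu>/2 + 1/(2 * real N ^ 2))"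
      unfolding cost_def by (rule sum_bounded_above) (use trm in auto)
    also have "\<dots> = (real N + 1) * (\<mu>/2 + 1/(2 * real N ^ 2))" by (simp add: T_def)
    also have "\<dots> \<le> 3 * sqrt \<mu>"
    proof -
      have a: "(real N + 1) * (\<mu>/2) \<le> real N * \<mu>" using Npos mu by simp
      have b: "real N * \<mu> \<le> (1 / sqrt \<mu> + 1) * \<mu>" using N2 mu by (simp add: mult_right_mono)
      have mm: "sqrt \<mu> * sqrt \<mu> = \<mu>" using mu by simp
      have h1: "(1 / sqrt \<mu> + 1) * \<mu> = \<mu> / sqrt \<mu> + \<mu>" by (simp add: algebra_simps)
      have h2: "\<mu> / sqrt \<mu> = sqrt \<mu>" using sq mm by (metis nonzero_mult_div_cancel_left less_irrefl)
      have "sqrt \<mu> * sqrt \<mu> \<le> 1 * sqrt \<mu>" by (rule mult_right_mono) (use sq in auto)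
      hence dd: "\<mu> \<le> sqrt \<mu>" using mm by simp
      have e1: "(real N + 1) * (1/(2 * real N ^ 2)) \<le> 1 / real N"
      proof -
        have "(real N + 1) * (1/(2 * real N ^ 2)) = (real N + 1) / (2 * real N) * (1 / real N)"
          using Npos by (simp add: power2_eq_square)
        also have "\<dots> \<le> 1 * (1 / real N)"
          by (rule mult_right_mono) (use Npos in auto)
        finally show ?thesis by simp
      qed
      have e2: "1 / real N \<le> sqrt \<mu>"
      proof -
        have "1 / real N \<le> 1 / (1 / sqrt \<mu>)"
          by (rule divide_left_mono) (use N1 sq Npos in auto)
        then show ?thesis by simp
      qed
      have "(real N + 1) * (\<mu>/2 + 1/(2 * real N ^ 2)) =
            (real N + 1) * (\<mu>/2) + (real N + 1) * (1/(2 * real N ^ 2))"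
        by (rule distrib_left)
      then show ?thesis using a b h1 h2 dd e1 e2 by linarith
    qed
    finally have optb: "opt_cost (fz z) T \<le> 3 * sqrt \<mu>"
      using opt_le[where f="fz z" and T=T and X=X, OF fnn[of z] X0] by linarith
    have opt0: "0 \<le> opt_cost (fz z) T" using opt_nonneg[where f="fz z" and T=T, OF fnn[of z]] .
    have ratio: "ereal (1/6 * L / sqrt \<mu>) \<le>
        ereal (alg_cost A (fz z) (gz z) T) / ereal (opt_cost (fz z) T)"
    proof (cases "opt_cost (fz z) T = 0")
      case True
      have "0 < alg_cost A (fz z) (gz z) T" using alg mu by linarith
      then show ?thesis using True by simp
    next
      case False
      then have op: "0 < opt_cost (fz z) T" using opt0 by simp
      have "1/6 * L / sqrt \<mu> = (L/2) / (3 * sqrt \<mu>)" by simp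
      also have "\<dots> \<le> alg_cost A (fz z) (gz z) T / opt_cost (fz z) T"
        by (rule frac_le) (use alg optb op mu in auto)
      finally show ?thesis using False by simp
    qed
    show ?thesis
      unfolding competitive_ratio_def
      by (rule SUP_upper2[OF inS[of z]]) (use ratio in simp)
  qed
  show ?thesis
    apply (rule exI[of _ "1/6"])
    apply (simp only: zero_less_divide_iff, simp)
    apply (rule exI[of _ 1])
    using main by auto
qed

end
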